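(* Let $k\ge 2$, let $G$ be a finite simple graph, and let $u,v\in V(G)$ satisfy $N(u)=N(v)$. Then in every closed neighborhood balanced $k$-coloring $c$ of $G$, $c(u)=c(v)$.
   Context: $N(v)=\{u : uv\in E(G)\}$ and $N[v]=N(v)\cup\{v\}$. A closed neighborhood balanced $k$-coloring of $G$ is a map $c: V(G)\to\{1,\dots,k\}$ such that for every vertex $v$ the numbers $|\{u\in N[v] : c(u)=i\}|$, $i=1,\dots,k$, are all equal. *)

theory Defs
  imports Main
begin

definition simple_graph :: "'a set \<Rightarrow> ('a \<Rightarrow> 'a \<Rightarrow> bool) \<Rightarrow> bool" where
  "simple_graph V E \<longleftrightarrow> finite V \<and> (\<forall>x y. E x y \<longrightarrow> E y x) \<and> (\<forall>x. \<not> E x x)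
     \<and> (\<forall>x y. E x y \<longrightarrow> x \<in> V \<and> y \<in> V)"

definition open_nbhd :: "'a set \<Rightarrow> ('a \<Rightarrow> 'a \<Rightarrow> bool) \<Rightarrow> 'a \<Rightarrow> 'a set" where
  "open_nbhd V E v = {u \<in> V. E u v}"

definition closed_nbhd :: "'a set \<Rightarrow> ('a \<Rightarrow> 'a \<Rightarrow> bool) \<Rightarrow> 'a \<Rightarrow> 'a set" where
  "closed_nbhd V E v = open_nbhd V E v \<union> {v}"

definition cnb_coloring :: "'a set \<Rightarrow> ('a \<Rightarrow> 'a \<Rightarrow> bool) \<Rightarrow> nat \<Rightarrow> ('a \<Rightarrow> nat) \<Rightarrow> bool" where
  "cnb_coloring V E k c \<longleftrightarrow> (\<forall>v\<in>V. c v \<in> {1..k}) \<and>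
     (\<forall>v\<in>V. \<forall>i\<in>{1..k}. \<forall>j\<in>{1..k}.
        card {u \<in> closed_nbhd V E v. c u = i} = card {u \<in> closed_nbhd V E v. c u = j})"

end

theory Submission
  imports Defs
begin

lemma card_ins_col:
  assumes "finite N" "w \<notin> N"
  shows "card {x \<in> N \<union> {w}. c x = i} = card {x \<in> N. c x = (i::nat)} + (if c w = i then 1 else 0)"
proof (cases "c w = i")
  case True
  have "{x \<in> N \<union> {w}. c x = i} = insert w {x \<in> N. c x = i}" using True by auto
  then show ?thesis using True assms by simp
next
  case False
  have "{x \<in> N \<union> {w}. c x = i} = {x \<in> N. c x = i}" using False by auto
  then show ?thesis using False by simp
qed

theorem mainTheorem18:
  fixes V :: "'a set" and E :: "'a \<Rightarrow> 'a \<Rightarrow> bool" and k :: nat and u v :: 'a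
    and c :: "'a \<Rightarrow> nat"
  assumes "k \<ge> 2"
    and "simple_graph V E"
    and "u \<in> V" and "v \<in> V"
    and "open_nbhd V E u = open_nbhd V E v"
    and "cnb_coloring V E k c"
  shows "c u = c v"
proof (rule ccontr)
  assume ne: "c u \<noteq> c v"
  define N where "N = open_nbhd V E u"
  have fin: "finite N" using assms(2) unfolding simple_graph_def N_def open_nbhd_def by auto
  have uN: "u \<notin> N" using assms(2) unfolding simple_graph_def N_def open_nbhd_def by auto
  have vN: "v \<notin> N" using assms(2,5) unfolding simple_graph_def N_def open_nbhd_def by auto
  have cu: "closed_nbhd V E u = N \<union> {u}" unfolding closed_nbhd_def N_def by simp
  have cv: "closed_nbhd V E v = N \<union> {v}" unfolding closed_nbhd_def N_def using assms(5) by simp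
  have r: "c u \<in> {1..k}" "c v \<in> {1..k}" using assms(3,4,6) unfolding cnb_coloring_def by auto
  have e1: "card {x \<in> closed_nbhd V E u. c x = c u} = card {x \<in> closed_nbhd V E u. c x = c v}"
    using assms(3,6) r unfolding cnb_coloring_def by blast
  have e2: "card {x \<in> closed_nbhd V E v. c x = c u} = card {x \<in> closed_nbhd V E v. c x = c v}"
    using assms(4,6) r unfolding cnb_coloring_def by blast
  show False
    using e1 e2 unfolding cu cv card_ins_col[OF fin uN] card_ins_col[OF fin vN] using ne by simp
qed

end
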